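(* Let $s\ge2$, $n\ge1$, $m\ge1$, $i\ge1$, and let $j'\ge1$ be minimal such that $m\le a_{i,j'}$. If $i=1$, or if $i>1$ and $j'=1$, then \[ \lambda_s(n,m)\le 2^{s-1}n+j'^{\,s-2}(m-1). \]
   Context: For $s\ge1$, a sequence contains an alternation of length $s+2$ if there are distinct symbols $a\ne b$ and indices $i_1<\dots<i_{s+2}$ whose entries are alternately $a,b,a,b,\dots$. A block is a sequence of pairwise distinct symbols. $\lambda_s(n,m)$ is the maximum length of a sequence using at most $n$ distinct symbols that contains no alternation of length $s+2$ and can be written as a concatenation of at most $m$ blocks. Ackermann's function: $a_{1,j}=2^j$ ($j\ge1$), $a_{i,1}=2$ ($i\ge2$), $a_{i,j}=w\cdot a_{i-1,w}$ with $w=a_{i,j-1}$ ($i,j\ge2$). *)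

theory Defs
  imports Main "HOL-Library.Extended_Nat"
begin

definition has_alternation :: "nat list \<Rightarrow> nat \<Rightarrow> bool" where
  "has_alternation xs k \<longleftrightarrow>
     (\<exists>a b (f :: nat \<Rightarrow> nat). a \<noteq> b \<and>
        strict_mono_on {0..<k} f \<and> (\<forall>t<k. f t < length xs) \<and>
        (\<forall>t<k. xs ! (f t) = (if even t then a else b)))"

definition at_most_blocks :: "nat list \<Rightarrow> nat \<Rightarrow> bool" where
  "at_most_blocks xs m \<longleftrightarrow>
     (\<exists>bs. length bs \<le> m \<and> concat bs = xs \<and> (\<forall>b\<in>set bs. distinct b))"

definition lambda_s :: "nat \<Rightarrow> nat \<Rightarrow> nat \<Rightarrow> enat" where
  "lambda_s s n m = (SUP xs \<in> {xs. card (set xs) \<le> n \<and> \<not> has_alternation xs (s + 2)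
                                    \<and> at_most_blocks xs m}. enat (length xs))"

text \<open>Ackermann's function a_{i,j}, meaningful for i,j \<ge> 1 (value 0 elsewhere).\<close>
fun ack :: "nat \<Rightarrow> nat \<Rightarrow> nat" where
  "ack 0 j = 0"
| "ack (Suc 0) j = 2 ^ j"
| "ack (Suc (Suc i)) 0 = 0"
| "ack (Suc (Suc i)) (Suc 0) = 2"
| "ack (Suc (Suc i)) (Suc (Suc j)) =
     (let w = ack (Suc (Suc i)) (Suc j) in w * ack (Suc i) w)"

end

theory Submission imports Defs "HOL-Library.Sublist" begin

lemma subseq_idx:
  assumes "subseq ys xs"
  shows "\<exists>f. strict_mono_on {0..<length ys} f \<and> (\<forall>t<length ys. f t < length xs \<and> xs ! f t = ys ! t)"
  using assms
proof (induction rule: list_emb.induct)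
  case (list_emb_Nil ys)
  then show ?case by (auto simp: strict_mono_on_def)
next
  case (list_emb_Cons xs ys y)
  then obtain f where f: "strict_mono_on {0..<length xs} f" "\<forall>t<length xs. f t < length ys \<and> ys ! f t = xs ! t" by blast
  show ?case
    by (rule exI[of _ "\<lambda>t. Suc (f t)"]) (use f in \<open>auto simp: strict_mono_on_def\<close>)
next
  case (list_emb_Cons2 x y xs ys)
  then obtain f where f: "strict_mono_on {0..<length xs} f" "\<forall>t<length xs. f t < length ys \<and> ys ! f t = xs ! t" by blast
  show ?case
    apply (rule exI[of _ "\<lambda>t. case t of 0 \<Rightarrow> 0 | Suc t' \<Rightarrow> Suc (f t')"])
    using f list_emb_Cons2.hyps(1) by (auto simp: strict_mono_on_def split: nat.splits)
qed

definition alt :: "nat \<Rightarrow> nat \<Rightarrow> nat \<Rightarrow> nat list" where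
  "alt a b k = map (\<lambda>t. if even t then a else b) [0..<k]"

lemma alt_nth: "t < k \<Longrightarrow> alt a b k ! t = (if even t then a else b)"
  by (simp add: alt_def del: upt_Suc)

lemma alt_Cons: "alt a b (Suc k) = a # alt b a k"
proof -
  have "alt a b (Suc k) = map (\<lambda>t. if even t then a else b) (0 # map Suc [0..<k])"
    unfolding alt_def by (simp only: map_Suc_upt upt_conv_Cons zero_less_Suc)
  also have "\<dots> = a # alt b a k" by (simp add: alt_def o_def del: upt_Suc)
  finally show ?thesis .
qed

definition noalt :: "nat \<Rightarrow> nat list \<Rightarrow> bool" where
  "noalt k xs \<longleftrightarrow> \<not> (\<exists>a b. a \<noteq> b \<and> subseq (alt a b k) xs)"

lemma noalt_of: "\<not> has_alternation xs k \<Longrightarrow> noalt k xs"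
proof -
  assume h: "\<not> has_alternation xs k"
  show "noalt k xs" unfolding noalt_def
  proof
    assume "\<exists>a b. a \<noteq> b \<and> subseq (alt a b k) xs"
    then obtain a b where ab: "a \<noteq> b" "subseq (alt a b k) xs" by blast
    from subseq_idx[OF ab(2)] obtain f where
      f: "strict_mono_on {0..<k} f" "\<forall>t<k. f t < length xs \<and> xs ! f t = alt a b k ! t"
      by (auto simp: alt_def)
    have "has_alternation xs k" unfolding has_alternation_def
      using ab(1) f by (intro exI[of _ a] exI[of _ b] exI[of _ f]) (auto simp: alt_def)
    with h show False by simp
  qed
qed

lemma subseq_set: "subseq xs ys \<Longrightarrow> set xs \<subseteq> set ys"
  by (induction rule: list_emb.induct) auto

lemma noalt_subseq: "noalt k xs \<Longrightarrow> subseq ys xs \<Longrightarrow> noalt k ys"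
  unfolding noalt_def using subseq_order.trans by blast

lemma noalt_global:
  assumes "noalt (Suc (Suc k)) (L @ R)" "set (filter P L) \<subseteq> set R" "k \<ge> 1"
  shows "noalt (Suc k) (filter P L)"
  unfolding noalt_def
proof
  assume "\<exists>a b. a \<noteq> b \<and> subseq (alt a b (Suc k)) (filter P L)"
  then obtain a b where ab: "a \<noteq> b" "subseq (alt a b (Suc k)) (filter P L)" by blast
  have l: "length (alt a b (Suc k)) = Suc k" by (simp add: alt_def)
  have l0: "0 < length (alt a b (Suc k))" and l1: "1 < length (alt a b (Suc k))" using l assms(3) by simp_all
  have "alt a b (Suc k) ! 0 \<in> set (alt a b (Suc k))" "alt a b (Suc k) ! 1 \<in> set (alt a b (Suc k))"
    by (rule nth_mem[OF l0], rule nth_mem[OF l1])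
  moreover have "alt a b (Suc k) ! 0 = a" "alt a b (Suc k) ! 1 = b" using assms(3)
    by (simp_all add: alt_nth)
  ultimately have "a \<in> set (alt a b (Suc k))" "b \<in> set (alt a b (Suc k))" by simp_all
  then have "a \<in> set R" "b \<in> set R" using subseq_set[OF ab(2)] assms(2) by auto
  then have c: "subseq [if even (Suc k) then a else b] R" by (simp add: subseq_singleton_left)
  have "subseq (alt a b (Suc k)) L" by (rule subseq_order.trans[OF ab(2) subseq_filter_left])
  then have "subseq (alt a b (Suc k) @ [if even (Suc k) then a else b]) (L @ R)"
    using c by (rule list_emb_append_mono)
  moreover have "alt a b (Suc k) @ [if even (Suc k) then a else b] = alt a b (Suc (Suc k))"
    by (simp add: alt_def)
  ultimately have "subseq (alt a b (Suc (Suc k))) (L @ R)" by simp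
  then show False using assms(1) ab(1) unfolding noalt_def by blast
qed

fun adj :: "nat list \<Rightarrow> nat" where
  "adj (x # y # zs) = (if x = y then 1 else 0) + adj (y # zs)"
| "adj _ = 0"

lemma adj_append_le: "adj (xs @ ys) \<le> adj xs + adj ys + 1"
  by (induction xs rule: adj.induct) (auto, (cases ys; auto)+)

lemma adj_append_ge: "adj xs + adj ys \<le> adj (xs @ ys)"
  by (induction xs rule: adj.induct) (auto, (cases ys; auto)+)

lemma adj_distinct: "distinct xs \<Longrightarrow> adj xs = 0"
  by (induction xs rule: adj.induct) auto

lemma adj_replicate: "adj (replicate r a) = r - 1"
proof (induction r)
  case (Suc r) then show ?case by (cases r) auto
qed simp

lemma adj_concat: "\<forall>b\<in>set bs. distinct b \<Longrightarrow> adj (concat bs) \<le> length bs - 1"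
proof (induction bs)
  case (Cons b bs)
  show ?case
  proof (cases "bs = []")
    case True then show ?thesis using Cons by (simp add: adj_distinct)
  next
    case False
    have "adj (concat (b # bs)) \<le> adj b + adj (concat bs) + 1"
      using adj_append_le by simp
    also have "\<dots> \<le> length bs - 1 + 1" using Cons by (simp add: adj_distinct)
    finally show ?thesis using False by (cases bs) auto
  qed
qed simp

lemma last_new: "xs \<noteq> [] \<Longrightarrow> \<exists>u a w. xs = u @ a # w \<and> a \<notin> set u \<and> set w \<subseteq> insert a (set u)"
proof (induction xs rule: rev_induct)
  case (snoc x ys)
  show ?case
  proof (cases "x \<in> set ys")
    case False then show ?thesis by (intro exI[of _ ys] exI[of _ x] exI[of _ "[]"]) auto
  next
    case True
    then have "ys \<noteq> []" by auto
    then obtain u a w where h: "ys = u @ a # w" "a \<notin> set u" "set w \<subseteq> insert a (set u)"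
      using snoc.IH by blast
    show ?thesis using h True by (intro exI[of _ u] exI[of _ a] exI[of _ "w @ [x]"]) auto
  qed
qed simp

lemma contig:
  assumes "xs \<noteq> []" "noalt 4 xs"
  shows "\<exists>u a r v. xs = u @ replicate r a @ v \<and> r \<ge> 1 \<and> a \<notin> set u \<and> a \<notin> set v"
proof -
  obtain u a w where h: "xs = u @ a # w" "a \<notin> set u" "set w \<subseteq> insert a (set u)"
    using last_new[OF assms(1)] by blast
  define v where "v = dropWhile (\<lambda>x. x = a) w"
  define r where "r = length (takeWhile (\<lambda>x. x = a) w)"
  have rep: "replicate r a = takeWhile (\<lambda>x. x = a) w" unfolding r_def
    by (rule replicate_length_same) (auto dest: set_takeWhileD)
  have w: "w = replicate r a @ v" unfolding rep v_def by (rule takeWhile_dropWhile_id[symmetric])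
  have "a \<notin> set v"
  proof
    assume av: "a \<in> set v"
    then obtain c v' where v: "v = c # v'" by (cases v) auto
    have "\<not> (hd v = a)" unfolding v_def by (rule hd_dropWhile) (use v v_def in simp)
    then have "c \<noteq> a" using v by simp
    have "c \<in> set w" using w v by simp
    then have cu: "c \<in> set u" using h(3) \<open>c \<noteq> a\<close> by auto
    have av': "a \<in> set v'" using av v \<open>c \<noteq> a\<close> by auto
    have "subseq [c] u" using cu by (simp only: subseq_singleton_left)
    moreover have "subseq [a, c, a] (a # replicate r a @ c # v')"
    proof -
      have "subseq [a] v'" using av' by (simp only: subseq_singleton_left)
      then have "subseq [c, a] (c # v')" by (rule subseq_Cons2)
      then have "subseq [c, a] (replicate r a @ c # v')" by (rule subseq_drop_many)
      then show ?thesis by (rule subseq_Cons2)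
    qed
    ultimately have "subseq ([c] @ [a, c, a]) (u @ a # replicate r a @ c # v')"
      by (rule list_emb_append_mono)
    moreover have "alt c a 4 = [c] @ [a, c, a]" 
    proof -
      have "(4::nat) = Suc (Suc (Suc (Suc 0)))" by simp
      then show ?thesis by (simp only: alt_Cons) (simp add: alt_def)
    qed
    moreover have "xs = u @ a # replicate r a @ c # v'" using h(1) w v by simp
    ultimately have "subseq (alt c a 4) xs" by (simp only:)
    then show False using assms(2) \<open>c \<noteq> a\<close> unfolding noalt_def by blast
  qed
  moreover have "xs = u @ replicate (Suc r) a @ v" using h(1) w by simp
  ultimately show ?thesis using h(2)
    by (intro exI[of _ u] exI[of _ a] exI[of _ "Suc r"] exI[of _ v]) simp
qed

lemma s2_bound:
  "xs \<noteq> [] \<Longrightarrow> noalt 4 xs \<Longrightarrow> length xs + 1 \<le> 2 * card (set xs) + adj xs"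
proof (induction "card (set xs)" arbitrary: xs rule: less_induct)
  case less
  obtain u a r v where h: "xs = u @ replicate r a @ v" "r \<ge> 1" "a \<notin> set u" "a \<notin> set v"
    using contig[OF less.prems] by blast
  have adjx: "adj u + (r - 1) + adj v \<le> adj xs"
    using adj_append_ge[of u "replicate r a @ v"] adj_append_ge[of "replicate r a" v] h(1)
    by (simp add: adj_replicate)
  have setx: "set xs = insert a (set (u @ v))" using h by auto
  have cardx: "card (set xs) = Suc (card (set (u @ v)))" using setx h by simp
  show ?case
  proof (cases "u @ v = []")
    case True
    then show ?thesis using h adjx by simp
  next
    case False
    have "subseq (u @ v) xs" using h(1) by (simp add: subseq_append' subseq_drop_many)
    then have "noalt 4 (u @ v)" using less.prems(2) noalt_subseq by blast
    then have "length (u @ v) + 1 \<le> 2 * card (set (u @ v)) + adj (u @ v)"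
      using less.hyps[of "u @ v"] cardx False by simp
    moreover have "adj (u @ v) \<le> adj u + adj v + 1" by (rule adj_append_le)
    ultimately show ?thesis using h adjx cardx by simp
  qed
qed

lemma len_concat_le:
  "\<forall>b\<in>set bs. distinct b \<Longrightarrow> length (concat bs) \<le> length bs * card (set (concat bs))"
proof (induction bs)
  case (Cons b bs)
  have "length b = card (set b)" using Cons.prems by (simp add: distinct_card)
  also have "\<dots> \<le> card (set (concat (b # bs)))" by (rule card_mono) auto
  finally have 1: "length b \<le> card (set (concat (b # bs)))" .
  have "card (set (concat bs)) \<le> card (set (concat (b # bs)))" by (rule card_mono) auto
  then have "length bs * card (set (concat bs)) \<le> length bs * card (set (concat (b # bs)))" by simp
  moreover have "length (concat bs) \<le> length bs * card (set (concat bs))" using Cons by simp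
  moreover have "length (concat (b # bs)) = length b + length (concat bs)" by simp
  moreover have "length (b # bs) * card (set (concat (b # bs))) = card (set (concat (b # bs))) + length bs * card (set (concat (b # bs)))" by simp
  ultimately show ?case using 1 by linarith
qed simp

lemma base2:
  assumes "\<forall>b\<in>set bs. distinct b" "noalt 4 (concat bs)"
  shows "length (concat bs) \<le> 2 * card (set (concat bs)) + (length bs - 1)"
proof (cases "concat bs = []")
  case False
  then show ?thesis using s2_bound[OF False assms(2)] adj_concat[OF assms(1)] by simp
next
  case True
  then have "length (concat bs) = 0" by (metis list.size(3))
  then show ?thesis by linarith
qed

lemma card_split:
  fixes L R :: "nat list"
  defines "G \<equiv> set L \<inter> set R"
  shows "card (set (L @ R)) = card (set L - G) + card (set R - G) + card G"
proof -
  have "set (L @ R) = (set L - G) \<union> ((set R - G) \<union> G)" unfolding G_def by auto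
  moreover have "card ((set L - G) \<union> ((set R - G) \<union> G)) = card (set L - G) + (card (set R - G) + card G)"
    by (subst card_Un_disjoint, (auto simp: G_def)[3])+ (auto simp: G_def)
  ultimately show ?thesis by simp
qed

lemma noalt_global2:
  assumes "noalt (Suc (Suc k)) (L @ R)" "set (filter P R) \<subseteq> set L" "k \<ge> 1"
  shows "noalt (Suc k) (filter P R)"
  unfolding noalt_def
proof
  assume "\<exists>a b. a \<noteq> b \<and> subseq (alt a b (Suc k)) (filter P R)"
  then obtain a b where ab: "a \<noteq> b" "subseq (alt a b (Suc k)) (filter P R)" by blast
  have l: "length (alt a b (Suc k)) = Suc k" by (simp add: alt_def)
  have "1 < length (alt a b (Suc k))" using l assms(3) by simp
  then have "alt a b (Suc k) ! 1 \<in> set (alt a b (Suc k))" by (rule nth_mem)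
  moreover have "alt a b (Suc k) ! 1 = b" using assms(3) by (simp add: alt_nth)
  ultimately have "b \<in> set (alt a b (Suc k))" by simp
  then have "b \<in> set L" using subseq_set[OF ab(2)] assms(2) by auto
  then have c: "subseq [b] L" by (simp add: subseq_singleton_left)
  have "subseq (alt a b (Suc k)) R" by (rule subseq_order.trans[OF ab(2) subseq_filter_left])
  with c have "subseq ([b] @ alt a b (Suc k)) (L @ R)" by (rule list_emb_append_mono)
  moreover have "[b] @ alt a b (Suc k) = alt b a (Suc (Suc k))" by (simp only: alt_Cons append_Cons append_Nil)
  ultimately have "subseq (alt b a (Suc (Suc k))) (L @ R)" by (simp only:)
  moreover have "b \<noteq> a" using ab(1) by simp
  ultimately have "\<exists>x y. x \<noteq> y \<and> subseq (alt x y (Suc (Suc k))) (L @ R)" by blast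
  then show False using assms(1) unfolding noalt_def by (simp only: not_True_eq_False)
qed

lemma arith_step:
  fixes lL lR gL gR n1 n2 n3 m1 m2 k s j0 :: nat
  assumes "s \<ge> 2"
    and "lL \<le> 2^s*n1 + j0^(s-1)*(m1-1)" "lR \<le> 2^s*n2 + j0^(s-1)*(m2-1)"
    and "gL \<le> 2^(s-1)*n3 + j0^(s-2)*(m1-1)" "gR \<le> 2^(s-1)*n3 + j0^(s-2)*(m2-1)"
    and "m1 + m2 = k"
  shows "lL + gL + (lR + gR) \<le> 2^s * (n1 + n2 + n3) + (Suc j0)^(s-1) * (k - 1)"
proof -
  obtain t where t: "s = Suc (Suc t)" using assms(1) by (metis add_2_eq_Suc le_iff_add)
  have p2: "2^(s-1)*n3 + 2^(s-1)*n3 = 2^s*n3" using t by simp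
  have c: "j0^(s-1) + j0^(s-2) \<le> (Suc j0)^(s-1)"
  proof -
    have "j0^(s-1) + j0^(s-2) = j0^t * Suc j0" using t by simp
    also have "\<dots> \<le> (Suc j0)^t * Suc j0" by (intro mult_le_mono1 power_mono) auto
    also have "\<dots> = (Suc j0)^(s-1)" using t by simp
    finally show ?thesis .
  qed
  have d1: "j0^(s-1)*(m1-1) + j0^(s-2)*(m1-1) + (j0^(s-1)*(m2-1) + j0^(s-2)*(m2-1))
      = (j0^(s-1) + j0^(s-2)) * ((m1 - 1) + (m2 - 1))" by (simp add: algebra_simps)
  have "(m1 - 1) + (m2 - 1) \<le> k - 1" using assms(6) by linarith
  with c have "(j0^(s-1) + j0^(s-2)) * ((m1 - 1) + (m2 - 1)) \<le> (Suc j0)^(s-1) * (k - 1)"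
    by (rule mult_le_mono)
  moreover have "2^s * (n1 + n2 + n3) = 2^s*n1 + 2^s*n2 + 2^s*n3" by (simp add: algebra_simps)
  ultimately show ?thesis using assms(2-5) p2 d1 by linarith
qed

lemma block_filter:
  assumes "\<forall>b\<in>set bs. distinct b"
  shows "\<forall>b\<in>set (map (filter P) bs). distinct b" "concat (map (filter P) bs) = filter P (concat bs)"
    "length (map (filter P) bs) = length bs"
  using assms by (auto simp: filter_concat)

lemma main:
  assumes "s \<ge> 2"
  shows "\<forall>j bs. j \<ge> 1 \<longrightarrow> length bs \<le> 2^j \<longrightarrow> (\<forall>b\<in>set bs. distinct b) \<longrightarrow>
     noalt (s+2) (concat bs) \<longrightarrow>
     length (concat bs) \<le> 2^(s-1) * card (set (concat bs)) + j^(s-2) * (length bs - 1)"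
  using assms
proof (induction s rule: nat_induct_at_least)
  case base
  show ?case
  proof (intro allI impI)
    fix j :: nat and bs :: "nat list list"
    assume "\<forall>b\<in>set bs. distinct b" "noalt (2 + 2) (concat bs)"
    then have "length (concat bs) \<le> 2 * card (set (concat bs)) + (length bs - 1)"
      by (intro base2) simp_all
    then show "length (concat bs) \<le> 2^(2-1) * card (set (concat bs)) + j^(2-2) * (length bs - 1)"
      by simp
  qed
next
  case (Suc s)
  have IHs: "length (concat bs) \<le> 2^(s-1) * card (set (concat bs)) + j^(s-2) * (length bs - 1)"
    if "j \<ge> 1" "length bs \<le> 2^j" "\<forall>b\<in>set bs. distinct b" "noalt (s+2) (concat bs)" for j bs
    using Suc.IH that by blast
  have glob: "length (filter Q (concat bs')) \<le> 2^(s-1) * card (set (filter Q (concat bs'))) + j0^(s-2) * (length bs' - 1)"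
    if "j0 \<ge> 1" "length bs' \<le> 2^j0" "\<forall>b\<in>set bs'. distinct b" "noalt (s+2) (filter Q (concat bs'))" for Q bs' j0
  proof -
    note bf = block_filter[OF that(3), of Q]
    have "length (concat (map (filter Q) bs')) \<le> 2^(s-1) * card (set (concat (map (filter Q) bs'))) + j0^(s-2) * (length (map (filter Q) bs') - 1)"
      by (rule IHs) (use that bf in \<open>simp_all only:\<close>)
    then show ?thesis by (simp only: bf)
  qed
  have main: "\<forall>bs. length bs \<le> 2^j \<longrightarrow> (\<forall>b\<in>set bs. distinct b) \<longrightarrow>
     noalt (Suc s+2) (concat bs) \<longrightarrow>
     length (concat bs) \<le> 2^(Suc s-1) * card (set (concat bs)) + j^(Suc s-2) * (length bs - 1)"
    if "j \<ge> 1" for j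
    using that
  proof (induction j rule: less_induct)
    case (less j)
    show ?case
    proof (intro allI impI)
      fix bs :: "nat list list"
      assume len: "length bs \<le> 2^j" and dis: "\<forall>b\<in>set bs. distinct b"
        and na: "noalt (Suc s + 2) (concat bs)"
      define k where "k = length bs"
      show "length (concat bs) \<le> 2^(Suc s-1) * card (set (concat bs)) + j^(Suc s-2) * (length bs - 1)"
      proof (cases "k \<le> 2")
        case True
        have "length (concat bs) \<le> k * card (set (concat bs))" using len_concat_le[OF dis] k_def by simp
        also have "\<dots> \<le> 2 * card (set (concat bs))" using True by simp
        also have "\<dots> \<le> 2^s * card (set (concat bs))"
        proof -
          have "(2::nat)^1 \<le> 2^s" using Suc.hyps by (intro power_increasing) auto
          then show ?thesis by simp
        qed
        finally show ?thesis by simp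
      next
        case False
        have "j \<noteq> 1"
        proof
          assume "j = 1" then have "k \<le> 2" using len k_def by simp
          with False show False by simp
        qed
        then have "j \<ge> 2" using less.prems by simp
        define j0 where "j0 = j - 1"
        have j0: "j = Suc j0" "j0 \<ge> 1" using \<open>j \<ge> 2\<close> unfolding j0_def by simp_all
        have kle: "k \<le> 2 * 2^j0" using len k_def j0 by simp
        define m1 where "m1 = (k + 1) div 2"
        define m2 where "m2 = k - m1"
        have m1le: "m1 \<le> 2^j0" using kle unfolding m1_def by linarith
        have m2le: "m2 \<le> 2^j0" using kle unfolding m1_def m2_def by linarith
        have m12: "m1 + m2 = k" "m1 \<le> k" unfolding m1_def m2_def using False by auto
        define bL where "bL = take m1 bs"
        define bR where "bR = drop m1 bs"
        define L where "L = concat bL"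
        define R where "R = concat bR"
        define G where "G = set L \<inter> set R"
        have xs: "concat bs = L @ R" unfolding L_def R_def bL_def bR_def
          by (metis append_take_drop_id concat_append)
        have lbL: "length bL = m1" unfolding bL_def using m12 k_def by simp
        have lbR: "length bR = m2" unfolding bR_def m2_def using k_def by simp
        have disL: "\<forall>b\<in>set bL. distinct b" using dis unfolding bL_def by (meson in_set_takeD)
        have disR: "\<forall>b\<in>set bR. distinct b" using dis unfolding bR_def by (meson in_set_dropD)
        have sL: "subseq L (concat bs)" unfolding xs by (rule subseq_rev_drop_many[OF subseq_order.refl])
        have sR: "subseq R (concat bs)" unfolding xs by (rule subseq_drop_many[OF subseq_order.refl])
        have subL: "subseq (filter P L) (concat bs)" for P by (rule subseq_order.trans[OF subseq_filter_left sL])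
        have subR: "subseq (filter P R) (concat bs)" for P by (rule subseq_order.trans[OF subseq_filter_left sR])
        have lt: "j0 < j" using j0 by simp
        have H1: "\<forall>bs. length bs \<le> 2^j0 \<longrightarrow> (\<forall>b\<in>set bs. distinct b) \<longrightarrow>
          noalt (Suc s+2) (concat bs) \<longrightarrow>
          length (concat bs) \<le> 2^(Suc s-1) * card (set (concat bs)) + j0^(Suc s-2) * (length bs - 1)"
          by (rule less.IH[OF lt j0(2)])
        have loc: "length (filter Q (concat bs')) \<le> 2^s * card (set (filter Q (concat bs'))) + j0^(s-1) * (length bs' - 1)"
          if "length bs' \<le> 2^j0" "\<forall>b\<in>set bs'. distinct b" "noalt (Suc s + 2) (filter Q (concat bs'))" for Q bs'
        proof -
          note bf = block_filter[OF that(2), of Q]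
          have "length (concat (map (filter Q) bs')) \<le> 2^(Suc s-1) * card (set (concat (map (filter Q) bs'))) + j0^(Suc s-2) * (length (map (filter Q) bs') - 1)"
            by (rule H1[rule_format]) (use that bf in \<open>simp_all only:\<close>)
          then show ?thesis by (simp only: bf) simp
        qed
        have lL: "length (filter (\<lambda>x. x \<notin> G) L) \<le> 2^s * card (set L - G) + j0^(s-1) * (m1 - 1)"
        proof -
          have "length (filter (\<lambda>x. x \<notin> G) L) \<le> 2^s * card (set (filter (\<lambda>x. x \<notin> G) L)) + j0^(s-1) * (length bL - 1)"
            unfolding L_def by (rule loc[OF _ disL]) (use lbL m1le noalt_subseq[OF na subL] L_def in simp_all)
          moreover have "set (filter (\<lambda>x. x \<notin> G) L) = set L - G" by auto
          ultimately show ?thesis using lbL by simp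
        qed
        have lR: "length (filter (\<lambda>x. x \<notin> G) R) \<le> 2^s * card (set R - G) + j0^(s-1) * (m2 - 1)"
        proof -
          have "length (filter (\<lambda>x. x \<notin> G) R) \<le> 2^s * card (set (filter (\<lambda>x. x \<notin> G) R)) + j0^(s-1) * (length bR - 1)"
            unfolding R_def by (rule loc[OF _ disR]) (use lbR m2le noalt_subseq[OF na subR] R_def in simp_all)
          moreover have "set (filter (\<lambda>x. x \<notin> G) R) = set R - G" by auto
          ultimately show ?thesis using lbR by simp
        qed
        have na': "noalt (Suc (Suc (Suc s))) (L @ R)" using na xs by simp
        have gL: "length (filter (\<lambda>x. x \<in> G) L) \<le> 2^(s-1) * card G + j0^(s-2) * (m1 - 1)"
        proof -
          have n1: "noalt (Suc (Suc s)) (filter (\<lambda>x. x \<in> G) L)"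
            by (rule noalt_global[OF na']) (use Suc.hyps in \<open>auto simp: G_def\<close>)
          have "length (filter (\<lambda>x. x \<in> G) L) \<le> 2^(s-1) * card (set (filter (\<lambda>x. x \<in> G) L)) + j0^(s-2) * (length bL - 1)"
            unfolding L_def by (rule glob[OF j0(2) _ disL]) (use lbL m1le n1 L_def in simp_all)
          moreover have "set (filter (\<lambda>x. x \<in> G) L) = G" by (auto simp: G_def)
          ultimately show ?thesis using lbL by simp
        qed
        have gR: "length (filter (\<lambda>x. x \<in> G) R) \<le> 2^(s-1) * card G + j0^(s-2) * (m2 - 1)"
        proof -
          have n1: "noalt (Suc (Suc s)) (filter (\<lambda>x. x \<in> G) R)"
            by (rule noalt_global2[OF na']) (use Suc.hyps in \<open>auto simp: G_def\<close>)
          have "length (filter (\<lambda>x. x \<in> G) R) \<le> 2^(s-1) * card (set (filter (\<lambda>x. x \<in> G) R)) + j0^(s-2) * (length bR - 1)"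
            unfolding R_def by (rule glob[OF j0(2) _ disR]) (use lbR m2le n1 R_def in simp_all)
          moreover have "set (filter (\<lambda>x. x \<in> G) R) = G" by (auto simp: G_def)
          ultimately show ?thesis using lbR by simp
        qed
        have lenL: "length L = length (filter (\<lambda>x. x \<notin> G) L) + length (filter (\<lambda>x. x \<in> G) L)"
          using sum_length_filter_compl[of "\<lambda>x. x \<in> G" L] by simp
        have lenR: "length R = length (filter (\<lambda>x. x \<notin> G) R) + length (filter (\<lambda>x. x \<in> G) R)"
          using sum_length_filter_compl[of "\<lambda>x. x \<in> G" R] by simp
        have card: "card (set (concat bs)) = card (set L - G) + card (set R - G) + card G"
          unfolding xs G_def by (rule card_split)
        have lx: "length (concat bs) = length (filter (\<lambda>x. x \<notin> G) L) + length (filter (\<lambda>x. x \<in> G) L) +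
            (length (filter (\<lambda>x. x \<notin> G) R) + length (filter (\<lambda>x. x \<in> G) R))"
          using xs lenL lenR by simp
        have "length (concat bs) \<le> 2^s * (card (set L - G) + card (set R - G) + card G) + (Suc j0)^(s-1) * (k - 1)"
          unfolding lx by (rule arith_step[OF Suc.hyps lL lR gL gR m12(1)])
        then show ?thesis using card j0 k_def by simp
      qed
    qed
  qed
  show ?case using main by simp
qed

theorem mainTheorem9:
  fixes s n m i j' :: nat
  assumes "s \<ge> 2" and "n \<ge> 1" and "m \<ge> 1" and "i \<ge> 1"
    and "j' \<ge> 1" and "m \<le> ack i j'"
    and "\<forall>j. 1 \<le> j \<and> j < j' \<longrightarrow> \<not> (m \<le> ack i j)"
    and "i = 1 \<or> (i > 1 \<and> j' = 1)"
  shows "lambda_s s n m \<le> enat (2 ^ (s - 1) * n + j' ^ (s - 2) * (m - 1))"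
proof -
  have mle: "m \<le> 2 ^ j'"
    using assms(8)
  proof
    assume "i = 1"
    then have "ack i j' = 2 ^ j'" by simp
    then show ?thesis using assms(6) by simp
  next
    assume h: "1 < i \<and> j' = 1"
    define i0 where "i0 = i - 2"
    have "i = Suc (Suc i0)" using h unfolding i0_def by arith
    moreover have "ack (Suc (Suc i0)) (Suc 0) = 2" by simp
    ultimately have "ack i j' = 2 ^ j'" using h by simp
    then show ?thesis using assms(6) by simp
  qed
  show ?thesis unfolding lambda_s_def
  proof (rule SUP_least)
    fix xs assume "xs \<in> {xs. card (set xs) \<le> n \<and> \<not> has_alternation xs (s + 2) \<and> at_most_blocks xs m}"
    then have c: "card (set xs) \<le> n" and na0: "\<not> has_alternation xs (s + 2)" and b: "at_most_blocks xs m"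
      by simp_all
    have na: "noalt (s+2) xs" by (rule noalt_of[OF na0])
    obtain bs where bs: "length bs \<le> m" "concat bs = xs" "\<forall>b\<in>set bs. distinct b"
      using b unfolding at_most_blocks_def by blast
    have lb: "length bs \<le> 2 ^ j'" using bs(1) mle by simp
    have na': "noalt (s+2) (concat bs)" using na bs(2) by simp
    have "length (concat bs) \<le> 2^(s-1) * card (set (concat bs)) + j'^(s-2) * (length bs - 1)"
      using main[OF assms(1)] assms(5) lb bs(3) na' by blast
    then have "length xs \<le> 2^(s-1) * card (set xs) + j'^(s-2) * (length bs - 1)"
      using bs(2) by simp
    also have "\<dots> \<le> 2^(s-1) * n + j'^(s-2) * (m - 1)"
    proof (rule add_mono)
      show "2^(s-1) * card (set xs) \<le> 2^(s-1) * n" using c by simp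
      have "length bs - 1 \<le> m - 1" using bs(1) by linarith
      then show "j'^(s-2) * (length bs - 1) \<le> j'^(s-2) * (m - 1)" by (rule mult_le_mono2)
    qed
    finally show "enat (length xs) \<le> enat (2 ^ (s - 1) * n + j' ^ (s - 2) * (m - 1))" by simp
  qed
qed

end
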